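(* Let \(S\) be an inverse semigroup with zero and unit. The arrow space of the groupoid \(\mathcal G(S)\) is locally quasi-compact and sober.
   Context: \(E=E(S)\) is the idempotent semilattice. A character on \(E\) is a map \(\varphi\colon E\to\{0,1\}\) with \(\varphi(0)=0\), \(\varphi(1)=1\), \(\varphi(ef)=\varphi(e)\varphi(f)\). \(\hat E\) is the set of characters with the topology generated by \(U_e=\{\varphi:\varphi(e)=1\}\). \(S\) acts on \(\hat E\) by \(s\cdot\varphi(e)=\varphi(s^*es)\) for \(\varphi\in U_{s^*s}\). \(\mathcal G(S)\) has object space \(\hat E\). Its arrows are classes \([s,\varphi]\) (\(s\in S\), \(\varphi\in U_{s^*s}\)), with \((s,\varphi)\sim(t,\psi)\) iff \(\varphi=\psi\) and \(se=te\) for some \(e\in E\) with \(\varphi(e)=1\). The structure maps are \(\mathrm s[s,\varphi]=\varphi\), \(\mathrm r[s,\varphi]=s\cdot\varphi\), \([s,t\cdot\psi][t,\psi]=[st,\psi]\). The arrow topology is generated by the sets \(\{[s,\varphi]:\varphi\in U\}\), \(U\subseteq U_{s^*s}\) open. A space is sober if every non-empty irreducible closed subset is the closure of a unique point. A closed set \(A\) is irreducible if \(A=A_1\cup A_2\) with \(A_i\) closed forces \(A_1=A\) or \(A_2=A\). *)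

theory Defs
  imports "HOL-Analysis.Analysis"
begin

definition inverse_semigroup_zu :: "('a \<Rightarrow> 'a \<Rightarrow> 'a) \<Rightarrow> 'a \<Rightarrow> 'a \<Rightarrow> bool" where
  "inverse_semigroup_zu m z u \<longleftrightarrow>
     (\<forall>a b c. m (m a b) c = m a (m b c)) \<and>
     (\<forall>s. \<exists>!t. m (m s t) s = s \<and> m (m t s) t = t) \<and>
     (\<forall>s. m z s = z \<and> m s z = z) \<and>
     (\<forall>s. m u s = s \<and> m s u = s)"

definition inv_el :: "('a \<Rightarrow> 'a \<Rightarrow> 'a) \<Rightarrow> 'a \<Rightarrow> 'a" where
  "inv_el m s = (THE t. m (m s t) s = s \<and> m (m t s) t = t)"

definition idems :: "('a \<Rightarrow> 'a \<Rightarrow> 'a) \<Rightarrow> 'a set" where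
  "idems m = {e. m e e = e}"

text \<open>Characters on E, represented as functions 'a => bool which are False off E.\<close>
definition characters :: "('a \<Rightarrow> 'a \<Rightarrow> 'a) \<Rightarrow> 'a \<Rightarrow> 'a \<Rightarrow> ('a \<Rightarrow> bool) set" where
  "characters m z u = {\<phi>. \<not> \<phi> z \<and> \<phi> u \<and>
      (\<forall>e\<in>idems m. \<forall>f\<in>idems m. \<phi> (m e f) = (\<phi> e \<and> \<phi> f)) \<and>
      (\<forall>x. x \<notin> idems m \<longrightarrow> \<not> \<phi> x)}"

definition Uset :: "('a \<Rightarrow> 'a \<Rightarrow> 'a) \<Rightarrow> 'a \<Rightarrow> 'a \<Rightarrow> 'a \<Rightarrow> ('a \<Rightarrow> bool) set" where
  "Uset m z u e = {\<phi> \<in> characters m z u. \<phi> e}"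

definition char_topology :: "('a \<Rightarrow> 'a \<Rightarrow> 'a) \<Rightarrow> 'a \<Rightarrow> 'a \<Rightarrow> ('a \<Rightarrow> bool) topology" where
  "char_topology m z u =
     subtopology (topology_generated_by {Uset m z u e | e. e \<in> idems m}) (characters m z u)"

text \<open>The germ [s,phi]: equivalence class of (s,phi), phi in U_{s^*s}.\<close>
definition germ :: "('a \<Rightarrow> 'a \<Rightarrow> 'a) \<Rightarrow> 'a \<Rightarrow> 'a \<Rightarrow> 'a \<Rightarrow> ('a \<Rightarrow> bool) \<Rightarrow> ('a \<times> ('a \<Rightarrow> bool)) set" where
  "germ m z u s \<phi> = {(t, \<psi>). \<psi> \<in> Uset m z u (m (inv_el m t) t) \<and> \<psi> = \<phi> \<and>
       (\<exists>e\<in>idems m. \<phi> e \<and> m s e = m t e)}"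

definition arrows :: "('a \<Rightarrow> 'a \<Rightarrow> 'a) \<Rightarrow> 'a \<Rightarrow> 'a \<Rightarrow> ('a \<times> ('a \<Rightarrow> bool)) set set" where
  "arrows m z u = {germ m z u s \<phi> | s \<phi>. \<phi> \<in> Uset m z u (m (inv_el m s) s)}"

definition arrow_topology :: "('a \<Rightarrow> 'a \<Rightarrow> 'a) \<Rightarrow> 'a \<Rightarrow> 'a \<Rightarrow> ('a \<times> ('a \<Rightarrow> bool)) set topology" where
  "arrow_topology m z u =
     subtopology
       (topology_generated_by
          {{germ m z u s \<phi> | \<phi>. \<phi> \<in> U} | s U.
              openin (char_topology m z u) U \<and> U \<subseteq> Uset m z u (m (inv_el m s) s)})
       (arrows m z u)"

definition locally_quasi_compact :: "'b topology \<Rightarrow> bool" where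
  "locally_quasi_compact X \<longleftrightarrow> neighbourhood_base_of (compactin X) X"

definition irreducible_closed :: "'b topology \<Rightarrow> 'b set \<Rightarrow> bool" where
  "irreducible_closed X A \<longleftrightarrow> closedin X A \<and>
     (\<forall>A1 A2. closedin X A1 \<and> closedin X A2 \<and> A = A1 \<union> A2 \<longrightarrow> A1 = A \<or> A2 = A)"

definition sober_space :: "'b topology \<Rightarrow> bool" where
  "sober_space X \<longleftrightarrow>
     (\<forall>A. A \<noteq> {} \<and> irreducible_closed X A \<longrightarrow> (\<exists>!x. x \<in> topspace X \<and> X closure_of {x} = A))"

end

theory Submission imports Defs begin

locale isz =
  fixes m :: "'a \<Rightarrow> 'a \<Rightarrow> 'a" and z u :: 'a
  assumes isg: "inverse_semigroup_zu m z u"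
begin

lemma assoc[simp]: "m (m a b) c = m a (m b c)"
  using isg unfolding inverse_semigroup_zu_def by blast

lemma zl[simp]: "m z s = z" and zr[simp]: "m s z = z" and ul[simp]: "m u s = s" and ur[simp]: "m s u = s"
  using isg unfolding inverse_semigroup_zu_def by blast+

abbreviation inv where "inv s \<equiv> inv_el m s"

lemma inv_prop: "m s (m (inv s) s) = s" "m (inv s) (m s (inv s)) = inv s"
proof -
  have ex: "\<exists>!t. m (m s t) s = s \<and> m (m t s) t = t"
    using isg unfolding inverse_semigroup_zu_def by blast
  from theI'[OF ex] show "m s (m (inv s) s) = s" "m (inv s) (m s (inv s)) = inv s"
    unfolding inv_el_def by auto
qed

lemma inv_unique: "m s (m t s) = s \<Longrightarrow> m t (m s t) = t \<Longrightarrow> t = inv s"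
proof -
  assume a: "m s (m t s) = s" "m t (m s t) = t"
  have ex: "\<exists>!t. m (m s t) s = s \<and> m (m t s) t = t"
    using isg unfolding inverse_semigroup_zu_def by blast
  show ?thesis unfolding inv_el_def
    by (rule the1_equality[OF ex, symmetric]) (use a in auto)
qed

lemma idemI: "m e e = e \<Longrightarrow> e \<in> idems m" by (simp add: idems_def)
lemma idemD: "e \<in> idems m \<Longrightarrow> m e e = e" by (simp add: idems_def)
lemma idem2: "e \<in> idems m \<Longrightarrow> m e (m e c) = m e c"
  by (metis assoc idemD)

lemma ss_idem: "m (inv s) s \<in> idems m"
  by (rule idemI) (metis assoc inv_prop(2))

lemma u_idem: "u \<in> idems m" and z_idem: "z \<in> idems m" by (auto intro: idemI)

lemma idem_self_inv: "e \<in> idems m \<Longrightarrow> inv e = e"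
  by (metis idemD inv_unique)

lemma idem_prod: assumes e: "e \<in> idems m" and f: "f \<in> idems m" shows "m e f \<in> idems m"
proof -
  define x where "x = inv (m e f)"
  have x1: "m e (m f (m x (m e f))) = m e f" using inv_prop(1)[of "m e f"] by (simp add: x_def)
  have x2: "m x (m e (m f x)) = x" using inv_prop(2)[of "m e f"] by (simp add: x_def)
  have ee: "m e e = e" "m f f = f" using e f idemD by auto
  have ee2: "m e (m e c) = m e c" "m f (m f c) = m f c" for c using e f idem2 by auto
  have "m f (m x e) = x"
  proof (rule inv_unique[of "m e f", unfolded x_def[symmetric]])
    show "m (m e f) (m (m f (m x e)) (m e f)) = m e f" using x1 ee ee2 by simp
    show "m (m f (m x e)) (m (m e f) (m f (m x e))) = m f (m x e)"
    proof -
      have x2': "m x (m e (m f (m x c))) = m x c" for c by (metis assoc x2)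
      show ?thesis using x2' ee2 by simp
    qed
  qed
  then have xx: "m x x = x"
    by (metis assoc x2)
  have "m e f = inv x"
    by (rule inv_unique) (use x1 x2 in simp_all)
  also have "inv x = x" using idem_self_inv[OF idemI[OF xx]] .
  finally show ?thesis using xx by (simp add: idemI)
qed

lemma idem_comm: assumes e: "e \<in> idems m" and f: "f \<in> idems m" shows "m e f = m f e"
proof -
  have a: "m e f \<in> idems m" "m f e \<in> idems m" using idem_prod e f by auto
  have "m f e = inv (m e f)"
    apply (rule inv_unique)
    using a[THEN idemD] e[THEN idemD] f[THEN idemD] by (metis assoc)+
  also have "\<dots> = m e f" using idem_self_inv a by simp
  finally show ?thesis by simp
qed

abbreviation "E \<equiv> idems m"
abbreviation "C \<equiv> characters m z u"
abbreviation "U \<equiv> Uset m z u"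
abbreviation "CT \<equiv> char_topology m z u"
abbreviation "BC \<equiv> {U e | e. e \<in> E}"

lemma chr_mult: "\<phi> \<in> C \<Longrightarrow> e \<in> E \<Longrightarrow> f \<in> E \<Longrightarrow> \<phi> (m e f) = (\<phi> e \<and> \<phi> f)"
  unfolding characters_def by blast
lemma chr_E: "\<phi> \<in> C \<Longrightarrow> \<phi> x \<Longrightarrow> x \<in> E"
  unfolding characters_def by blast
lemma chr_z: "\<phi> \<in> C \<Longrightarrow> \<not> \<phi> z" and chr_u: "\<phi> \<in> C \<Longrightarrow> \<phi> u"
  unfolding characters_def by blast+
lemma U_iff: "\<phi> \<in> U e \<longleftrightarrow> \<phi> \<in> C \<and> \<phi> e" by (simp add: Uset_def)
lemma U_sub: "U e \<subseteq> C" by (auto simp: U_iff)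
lemma U_u: "U u = C" by (auto simp: U_iff chr_u)

lemma gen_sub: "generate_topology_on BC W \<Longrightarrow> W \<subseteq> C"
  by (induction rule: generate_topology_on.induct) (use U_sub in auto)

lemma CT_open: "openin CT W \<longleftrightarrow> generate_topology_on BC W"
proof
  assume "openin CT W"
  then obtain T where "generate_topology_on BC T" "W = T \<inter> C"
    unfolding char_topology_def openin_subtopology openin_topology_generated_by_iff by blast
  then show "generate_topology_on BC W" using gen_sub[of T] by (simp add: Int_absorb2)
next
  assume "generate_topology_on BC W"
  then show "openin CT W" unfolding char_topology_def openin_subtopology openin_topology_generated_by_iff
    using gen_sub[of W] by (intro exI[of _ W]) (simp add: Int_absorb2)
qed

lemma CT_topspace: "topspace CT = C"
proof -
  have "C \<subseteq> \<Union>BC" using U_u u_idem by blast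
  then show ?thesis unfolding char_topology_def topspace_subtopology topology_generated_by_topspace by blast
qed

lemma U_open: "e \<in> E \<Longrightarrow> openin CT (U e)"
  unfolding CT_open by (rule generate_topology_on.Basis) auto

lemma U_Int: "e \<in> E \<Longrightarrow> f \<in> E \<Longrightarrow> U e \<inter> U f = U (m e f)"
  by (auto simp: U_iff chr_mult)

lemma CT_basis: "openin CT W \<Longrightarrow> \<phi> \<in> W \<Longrightarrow> \<exists>e\<in>E. \<phi> \<in> U e \<and> U e \<subseteq> W"
  unfolding CT_open
proof (induction arbitrary: \<phi> rule: generate_topology_on.induct)
  case (Int a b)
  then obtain e f where "e \<in> E" "\<phi> \<in> U e" "U e \<subseteq> a" "f \<in> E" "\<phi> \<in> U f" "U f \<subseteq> b" by force
  moreover have "m e f \<in> E" using idem_prod \<open>e \<in> E\<close> \<open>f \<in> E\<close> by blast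
  moreover have "U (m e f) = U e \<inter> U f" using U_Int \<open>e \<in> E\<close> \<open>f \<in> E\<close> by simp
  ultimately show ?case by blast
next
  case (UN K)
  then show ?case by blast
qed auto

definition pchar where "pchar e = (\<lambda>x. x \<in> E \<and> m e x = e)"

lemma pchar_C: assumes e: "e \<in> E" and ez: "e \<noteq> z" shows "pchar e \<in> C"
proof -
  have "pchar e (m f g) = (pchar e f \<and> pchar e g)" if f: "f \<in> E" and g: "g \<in> E" for f g
  proof -
    have fg: "m f g \<in> E" using idem_prod f g by auto
    have "m e f = e \<and> m e g = e" if h: "m e (m f g) = e"
    proof -
      have gf: "m g f = m f g" using idem_comm[OF f g] by simp
      have "m e f = m (m e (m f g)) f" using h by simp
      also have "\<dots> = m e (m f (m g f))" by (simp only: assoc)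
      also have "\<dots> = m e (m f (m f g))" by (simp only: gf)
      also have "\<dots> = m e (m f g)" by (simp only: idem2[OF f])
      also have "\<dots> = e" by (rule h)
      finally have 1: "m e f = e" .
      have "m e g = m (m e (m f g)) g" using h by simp
      also have "\<dots> = m e (m f (m g g))" by (simp only: assoc)
      also have "\<dots> = e" using idemD[OF g] h by simp
      finally show ?thesis using 1 by simp
    qed
    moreover have "m e (m f g) = e" if "m e f = e" "m e g = e"
      using that by (metis assoc)
    ultimately show ?thesis using fg f g unfolding pchar_def by blast
  qed
  moreover have "\<not> pchar e z" using ez by (simp add: pchar_def)
  moreover have "pchar e u" using u_idem by (simp add: pchar_def)
  moreover have "\<forall>x. x \<notin> E \<longrightarrow> \<not> pchar e x" by (simp add: pchar_def)
  ultimately show ?thesis unfolding characters_def by blast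
qed

lemma pchar_U: "e \<in> E \<Longrightarrow> e \<noteq> z \<Longrightarrow> pchar e \<in> U e"
  using pchar_C by (auto simp: U_iff pchar_def idemD)

lemma pchar_le: assumes "e \<in> E" "pchar e f" shows "U e \<subseteq> U f"
proof
  fix \<psi> assume p: "\<psi> \<in> U e"
  have f: "f \<in> E" "m e f = e" using assms unfolding pchar_def by auto
  have "\<psi> (m e f) = (\<psi> e \<and> \<psi> f)" using chr_mult[of \<psi> e f] p assms(1) f by (auto simp: U_iff)
  then show "\<psi> \<in> U f" using p f by (auto simp: U_iff)
qed

lemma compact_pt: "K \<subseteq> topspace X \<Longrightarrow> x \<in> K \<Longrightarrow> (\<And>T. openin X T \<Longrightarrow> x \<in> T \<Longrightarrow> K \<subseteq> T) \<Longrightarrow> compactin X K"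
  unfolding compactin_def
proof (intro conjI allI impI)
  fix \<U> assume "K \<subseteq> topspace X" "x \<in> K" "\<And>T. openin X T \<Longrightarrow> x \<in> T \<Longrightarrow> K \<subseteq> T"
     "(\<forall>U\<in>\<U>. openin X U) \<and> K \<subseteq> \<Union> \<U>"
  then obtain T where "T \<in> \<U>" "x \<in> T" "K \<subseteq> T" by blast
  then show "\<exists>\<F>. finite \<F> \<and> \<F> \<subseteq> \<U> \<and> K \<subseteq> \<Union> \<F>" by (intro exI[of _ "{T}"]) auto
qed auto


abbreviation g where "g s \<phi> \<equiv> germ m z u s \<phi>"
abbreviation ss where "ss s \<equiv> m (inv s) s"
abbreviation "AT \<equiv> arrow_topology m z u"
abbreviation "Arr \<equiv> arrows m z u"
abbreviation "AB \<equiv> {{g s \<phi> | \<phi>. \<phi> \<in> V} | s V. openin CT V \<and> V \<subseteq> U (ss s)}"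

lemma germ_iff: "(t, \<psi>) \<in> g s \<phi> \<longleftrightarrow> \<psi> \<in> U (ss t) \<and> \<psi> = \<phi> \<and> (\<exists>e\<in>E. \<phi> e \<and> m s e = m t e)"
  unfolding germ_def by auto

lemma germ_self: "\<phi> \<in> U (ss s) \<Longrightarrow> (s, \<phi>) \<in> g s \<phi>"
  unfolding germ_iff using ss_idem by (auto simp: U_iff)

lemma germ_snd: "x \<in> g s \<phi> \<Longrightarrow> snd x = \<phi>"
  unfolding germ_def by auto

lemma germ_inj: "\<phi> \<in> U (ss s) \<Longrightarrow> g s \<phi> = g t \<psi> \<Longrightarrow> \<phi> = \<psi>"
  using germ_self germ_snd by (metis snd_conv)

lemma germ_conv: "\<phi> \<in> U (ss s) \<Longrightarrow> g s \<phi> = g t \<phi> \<Longrightarrow> \<exists>e\<in>E. \<phi> e \<and> m s e = m t e"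
  using germ_self germ_iff by metis

lemma germ_sub: assumes e: "e \<in> E" "\<psi> e" "m s e = m t e" and \<psi>: "\<psi> \<in> C"
  shows "g s \<psi> \<subseteq> g t \<psi>"
proof
  fix x assume "x \<in> g s \<psi>"
  then obtain r where x: "x = (r, \<psi>)" "\<psi> \<in> U (ss r)" and "\<exists>f\<in>E. \<psi> f \<and> m s f = m r f"
    by (metis germ_iff prod.collapse)
  then obtain f where f: "f \<in> E" "\<psi> f" "m s f = m r f" by blast
  have "m e f \<in> E" using idem_prod e f by blast
  moreover have "\<psi> (m e f)" using chr_mult[OF \<psi> e(1) f(1)] e f by simp
  moreover have "m t (m e f) = m r (m e f)"
  proof -
    have "m t (m e f) = m (m t e) f" by simp
    also have "\<dots> = m (m s e) f" using e by simp
    also have "\<dots> = m s (m f e)" using idem_comm[OF e(1) f(1)] by simp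
    also have "\<dots> = m (m s f) e" by simp
    also have "\<dots> = m (m r f) e" using f by simp
    also have "\<dots> = m r (m e f)" using idem_comm[OF e(1) f(1)] by simp
    finally show ?thesis .
  qed
  ultimately show "x \<in> g t \<psi>" using x by (auto simp: germ_iff)
qed

lemma germ_eq: "e \<in> E \<Longrightarrow> \<psi> e \<Longrightarrow> m s e = m t e \<Longrightarrow> \<psi> \<in> C \<Longrightarrow> g s \<psi> = g t \<psi>"
  using germ_sub by (metis subset_antisym)

lemma AB_sub: "W \<in> AB \<Longrightarrow> W \<subseteq> Arr"
  unfolding arrows_def by blast

lemma genA_sub: "generate_topology_on AB W \<Longrightarrow> W \<subseteq> Arr"
  by (induction rule: generate_topology_on.induct) (use AB_sub in auto)

lemma AT_open: "openin AT W \<longleftrightarrow> generate_topology_on AB W"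
proof
  assume "openin AT W"
  then obtain T where "generate_topology_on AB T" "W = T \<inter> Arr"
    unfolding arrow_topology_def openin_subtopology openin_topology_generated_by_iff by blast
  then show "generate_topology_on AB W" using genA_sub[of T] by (simp add: Int_absorb2)
next
  assume "generate_topology_on AB W"
  then show "openin AT W" unfolding arrow_topology_def openin_subtopology openin_topology_generated_by_iff
    using genA_sub[of W] by (intro exI[of _ W]) (simp add: Int_absorb2)
qed

lemma img_eq: "{g s \<phi> | \<phi>. \<phi> \<in> V} = g s ` V" by auto

lemma basic_open: "openin CT V \<Longrightarrow> V \<subseteq> U (ss s) \<Longrightarrow> openin AT (g s ` V)"
  unfolding AT_open by (rule generate_topology_on.Basis) (auto simp flip: img_eq)

lemma Uss_open: "openin CT (U (ss s))" using U_open ss_idem by blast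

lemma AT_topspace: "topspace AT = Arr"
proof -
  have "Arr \<subseteq> \<Union>AB"
  proof
    fix x assume "x \<in> Arr"
    then obtain s \<phi> where "x = g s \<phi>" "\<phi> \<in> U (ss s)" unfolding arrows_def by blast
    moreover have "{g s \<phi> | \<phi>. \<phi> \<in> U (ss s)} \<in> AB" using Uss_open by blast
    ultimately show "x \<in> \<Union>AB" by blast
  qed
  then show ?thesis unfolding arrow_topology_def topspace_subtopology topology_generated_by_topspace by blast
qed

lemma arrE: "x \<in> Arr \<Longrightarrow> (\<And>s \<phi>. x = g s \<phi> \<Longrightarrow> \<phi> \<in> U (ss s) \<Longrightarrow> P) \<Longrightarrow> P"
  unfolding arrows_def by blast

lemma arrI: "\<phi> \<in> U (ss s) \<Longrightarrow> g s \<phi> \<in> Arr"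
  unfolding arrows_def by blast

lemma pre_open: "openin AT W \<Longrightarrow> openin CT {\<phi> \<in> U (ss s). g s \<phi> \<in> W}"
  unfolding AT_open
proof (induction rule: generate_topology_on.induct)
  case Empty
  then show ?case by simp
next
  case (Int a b)
  have "{\<phi> \<in> U (ss s). g s \<phi> \<in> a \<inter> b} = {\<phi> \<in> U (ss s). g s \<phi> \<in> a} \<inter> {\<phi> \<in> U (ss s). g s \<phi> \<in> b}" by auto
  then show ?case using Int by auto
next
  case (UN K)
  have "{\<phi> \<in> U (ss s). g s \<phi> \<in> \<Union>K} = \<Union>((\<lambda>k. {\<phi> \<in> U (ss s). g s \<phi> \<in> k}) ` K)" by auto
  then show ?case using UN by auto
next
  case (Basis W)
  then obtain t V where W: "W = {g t \<phi> | \<phi>. \<phi> \<in> V}" "openin CT V" "V \<subseteq> U (ss t)" by blast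
  show ?case
  proof (subst openin_subopen, intro ballI)
    fix \<phi> assume "\<phi> \<in> {\<phi> \<in> U (ss s). g s \<phi> \<in> W}"
    then obtain \<psi> where p: "\<phi> \<in> U (ss s)" "\<psi> \<in> V" "g s \<phi> = g t \<psi>" using W by blast
    then have "\<phi> = \<psi>" using germ_inj by blast
    then obtain e where e: "e \<in> E" "\<phi> e" "m s e = m t e" using germ_conv p by blast
    define T where "T = U e \<inter> V \<inter> U (ss s)"
    have "openin CT T" unfolding T_def using U_open[OF e(1)] W(2) Uss_open by blast
    moreover have "\<phi> \<in> T" unfolding T_def using p \<open>\<phi> = \<psi>\<close> e by (auto simp: U_iff)
    moreover have "T \<subseteq> {\<phi> \<in> U (ss s). g s \<phi> \<in> W}"
    proof
      fix \<rho> assume "\<rho> \<in> T"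
      then have "\<rho> \<in> U (ss s)" "\<rho> \<in> V" "\<rho> e" "\<rho> \<in> C" unfolding T_def by (auto simp: U_iff)
      moreover have "g s \<rho> = g t \<rho>" using germ_eq e \<open>\<rho> e\<close> \<open>\<rho> \<in> C\<close> by blast
      ultimately show "\<rho> \<in> {\<phi> \<in> U (ss s). g s \<phi> \<in> W}" using W(1) by auto
    qed
    ultimately show "\<exists>T. openin CT T \<and> \<phi> \<in> T \<and> T \<subseteq> {\<phi> \<in> U (ss s). g s \<phi> \<in> W}" by blast
  qed
qed


lemma U_compact: "e \<in> E \<Longrightarrow> \<phi> \<in> C \<Longrightarrow> \<phi> e \<Longrightarrow> e \<noteq> z" using chr_z by blast

lemma LQC: "locally_quasi_compact AT"
  unfolding locally_quasi_compact_def neighbourhood_base_of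
proof (intro allI impI, elim conjE)
  fix W x assume W: "openin AT W" and x: "x \<in> W"
  then have "x \<in> Arr" using openin_subset AT_topspace by blast
  then obtain s \<phi> where xs: "x = g s \<phi>" "\<phi> \<in> U (ss s)" by (rule arrE)
  have "openin CT {\<phi> \<in> U (ss s). g s \<phi> \<in> W}" using pre_open[OF W] .
  then obtain e where e: "e \<in> E" "\<phi> \<in> U e" "U e \<subseteq> {\<phi> \<in> U (ss s). g s \<phi> \<in> W}"
    using CT_basis xs x by blast
  have ez: "e \<noteq> z" using e(2) chr_z by (auto simp: U_iff)
  have op: "openin AT (g s ` U e)" using basic_open U_open[OF e(1)] e(3) by blast
  have "compactin AT (g s ` U e)"
  proof (rule compact_pt)
    show "g s ` U e \<subseteq> topspace AT" using AT_topspace arrI e(3) by blast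
    show "g s (pchar e) \<in> g s ` U e" using pchar_U[OF e(1) ez] by blast
    fix T assume T: "openin AT T" "g s (pchar e) \<in> T"
    have "pchar e \<in> {\<phi> \<in> U (ss s). g s \<phi> \<in> T}" using pchar_U[OF e(1) ez] e(3) T by blast
    then obtain f where f: "f \<in> E" "pchar e \<in> U f" "U f \<subseteq> {\<phi> \<in> U (ss s). g s \<phi> \<in> T}"
      using CT_basis pre_open[OF T(1)] by blast
    have "U e \<subseteq> U f" using pchar_le[OF e(1)] f(2) by (auto simp: U_iff)
    then show "g s ` U e \<subseteq> T" using f(3) by blast
  qed
  moreover have "x \<in> g s ` U e" using xs e by blast
  moreover have "g s ` U e \<subseteq> W" using e(3) by blast
  ultimately show "\<exists>U V. openin AT U \<and> compactin AT V \<and> x \<in> U \<and> U \<subseteq> V \<and> V \<subseteq> W"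
    using op by blast
qed

lemma sep: assumes "\<phi> \<in> U (ss s)" "\<psi> \<in> U (ss s)" "g s \<phi> \<in> AT closure_of {g s \<psi>}" "\<phi> a"
  shows "\<psi> a"
proof -
  have a: "a \<in> E" using assms(1,4) chr_E by (auto simp: U_iff)
  have "openin AT (g s ` (U a \<inter> U (ss s)))" using basic_open U_open[OF a] Uss_open by blast
  moreover have "g s \<phi> \<in> g s ` (U a \<inter> U (ss s))" using assms(1,4) by (auto simp: U_iff)
  ultimately have "g s \<psi> \<in> g s ` (U a \<inter> U (ss s))"
    using assms(3)[unfolded in_closure_of, THEN conjunct2, rule_format, of "g s ` (U a \<inter> U (ss s))"] by simp
  then obtain \<rho> where r: "\<rho> \<in> U a" "g s \<psi> = g s \<rho>" by blast
  have "\<psi> = \<rho>" by (rule germ_inj[OF assms(2) r(2)])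
  then show ?thesis using r(1) by (simp add: U_iff)
qed

lemma T0: assumes "x \<in> Arr" "y \<in> Arr" "x \<in> AT closure_of {y}" "y \<in> AT closure_of {x}" shows "x = y"
proof -
  obtain s \<phi> where xs: "x = g s \<phi>" "\<phi> \<in> U (ss s)" using assms(1) by (rule arrE)
  have o: "openin AT (g s ` U (ss s))" using basic_open Uss_open by blast
  have "x \<in> g s ` U (ss s)" using xs by blast
  then have "\<exists>y'. y' \<in> {y} \<and> y' \<in> g s ` U (ss s)"
    using o assms(3)[unfolded in_closure_of, THEN conjunct2, rule_format, of "g s ` U (ss s)"] by blast
  then have "y \<in> g s ` U (ss s)" by simp
  then obtain \<psi> where ys: "y = g s \<psi>" "\<psi> \<in> U (ss s)" by blast
  have c1: "g s \<phi> \<in> AT closure_of {g s \<psi>}" using assms(3) xs ys by simp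
  have c2: "g s \<psi> \<in> AT closure_of {g s \<phi>}" using assms(4) xs ys by simp
  have "\<phi> a = \<psi> a" for a using sep[OF xs(2) ys(2) c1, of a] sep[OF ys(2) xs(2) c2, of a] by blast
  then have "\<phi> = \<psi>" by (rule ext)
  then show ?thesis using xs ys by simp
qed

lemma sober: "sober_space AT"
  unfolding sober_space_def
proof (intro allI impI, elim conjE)
  fix A assume Ane: "A \<noteq> {}" and irr0: "irreducible_closed AT A"
  have clA: "closedin AT A" using irr0 irreducible_closed_def by blast
  have irr: "T1 \<inter> T2 \<inter> A \<noteq> {}" if "openin AT T1" "openin AT T2" "T1 \<inter> A \<noteq> {}" "T2 \<inter> A \<noteq> {}" for T1 T2
  proof
    assume e: "T1 \<inter> T2 \<inter> A = {}"
    have "closedin AT (A - T1)" "closedin AT (A - T2)" using clA that by auto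
    moreover have "A = (A - T1) \<union> (A - T2)" using e by blast
    ultimately have "A - T1 = A \<or> A - T2 = A" using irr0 unfolding irreducible_closed_def by blast
    then show False using that by blast
  qed
  have Asub: "A \<subseteq> Arr" using closedin_subset[OF clA] AT_topspace by simp
  obtain x0 where "x0 \<in> A" using Ane by blast
  then obtain s \<phi>0 where x0: "x0 = g s \<phi>0" "\<phi>0 \<in> U (ss s)" "g s \<phi>0 \<in> A" using Asub arrE by blast
  define B where "B = {\<phi> \<in> U (ss s). g s \<phi> \<in> A}"
  define F where "F = (\<lambda>x. \<exists>\<phi>\<in>B. \<phi> x)"
  have BC: "B \<subseteq> C" unfolding B_def using U_sub by blast
  have \<phi>0B: "\<phi>0 \<in> B" unfolding B_def using x0 by blast
  have FC: "F \<in> C"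
  proof -
    have "F (m e f) = (F e \<and> F f)" if e: "e \<in> E" and f: "f \<in> E" for e f
    proof
      assume "F (m e f)"
      then show "F e \<and> F f" unfolding F_def using chr_mult BC e f by blast
    next
      assume "F e \<and> F f"
      then obtain \<phi>1 \<phi>2 where p: "\<phi>1 \<in> B" "\<phi>1 e" "\<phi>2 \<in> B" "\<phi>2 f" unfolding F_def by blast
      define T1 where "T1 = g s ` (U e \<inter> U (ss s))"
      define T2 where "T2 = g s ` (U f \<inter> U (ss s))"
      have o: "openin AT T1" "openin AT T2" unfolding T1_def T2_def
        using basic_open U_open e f Uss_open by blast+
      have "g s \<phi>1 \<in> T1 \<inter> A" "g s \<phi>2 \<in> T2 \<inter> A" using p BC unfolding T1_def T2_def B_def
        by (auto simp: U_iff)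
      then obtain y where "y \<in> T1 \<inter> T2 \<inter> A" using irr[OF o] by blast
      then obtain \<rho>1 \<rho>2 where r: "\<rho>1 \<in> U e" "\<rho>1 \<in> U (ss s)" "\<rho>2 \<in> U f" "g s \<rho>1 = g s \<rho>2" "g s \<rho>1 \<in> A"
        unfolding T1_def T2_def by blast
      then have "\<rho>1 = \<rho>2" using germ_inj by blast
      then have "\<rho>1 \<in> B" "\<rho>1 (m e f)" using r chr_mult e f unfolding B_def by (auto simp: U_iff)
      then show "F (m e f)" unfolding F_def by blast
    qed
    moreover have "\<not> F z" unfolding F_def using BC chr_z by blast
    moreover have "F u" unfolding F_def using BC chr_u \<phi>0B by blast
    moreover have "\<forall>x. x \<notin> E \<longrightarrow> \<not> F x" unfolding F_def using BC chr_E by blast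
    ultimately show ?thesis unfolding characters_def by blast
  qed
  have FU: "F \<in> U (ss s)" using FC \<phi>0B x0(2) unfolding F_def by (auto simp: U_iff)
  have gFA: "g s F \<in> A"
  proof (rule ccontr)
    assume nA: "g s F \<notin> A"
    have "openin AT (topspace AT - A)" using clA closedin_def by blast
    then have op: "openin CT {\<phi> \<in> U (ss s). g s \<phi> \<in> topspace AT - A}" by (rule pre_open)
    have "F \<in> {\<phi> \<in> U (ss s). g s \<phi> \<in> topspace AT - A}" using FU nA arrI AT_topspace by blast
    then obtain e where e: "e \<in> E" "F \<in> U e" "U e \<subseteq> {\<phi> \<in> U (ss s). g s \<phi> \<in> topspace AT - A}"
      using CT_basis[OF op] by blast
    then obtain \<phi> where "\<phi> \<in> B" "\<phi> e" unfolding F_def U_iff by blast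
    then have "\<phi> \<in> U e" using BC by (auto simp: U_iff)
    then show False using e(3) \<open>\<phi> \<in> B\<close> unfolding B_def by blast
  qed
  have cl: "AT closure_of {g s F} = A"
  proof
    show "AT closure_of {g s F} \<subseteq> A" by (rule closure_of_minimal) (use gFA clA in auto)
    show "A \<subseteq> AT closure_of {g s F}"
    proof
      fix h assume hA: "h \<in> A"
      show "h \<in> AT closure_of {g s F}"
        unfolding in_closure_of
      proof (intro conjI allI impI)
        show "h \<in> topspace AT" using hA Asub AT_topspace by auto
        fix T assume T: "h \<in> T \<and> openin AT T"
        have o2: "openin AT (g s ` U (ss s))" using basic_open Uss_open by blast
        have "T \<inter> g s ` U (ss s) \<inter> A \<noteq> {}"
          using irr[OF conjunct2[OF T] o2] T hA x0 by blast
        then obtain \<rho> where r: "\<rho> \<in> U (ss s)" "g s \<rho> \<in> T" "g s \<rho> \<in> A" by blast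
        then have rB: "\<rho> \<in> B" unfolding B_def by blast
        have "openin CT {\<phi> \<in> U (ss s). g s \<phi> \<in> T}" using pre_open T by blast
        then obtain e where e: "e \<in> E" "\<rho> \<in> U e" "U e \<subseteq> {\<phi> \<in> U (ss s). g s \<phi> \<in> T}"
          using CT_basis r by blast
        have "F e" unfolding F_def using rB e(2) by (auto simp: U_iff)
        then have "F \<in> U e" using FC by (simp add: U_iff)
        then show "\<exists>y. y \<in> {g s F} \<and> y \<in> T" using e(3) by blast
      qed
    qed
  qed
  show "\<exists>!x. x \<in> topspace AT \<and> AT closure_of {x} = A"
  proof (rule ex1I)
    show "g s F \<in> topspace AT \<and> AT closure_of {g s F} = A" using cl FU arrI AT_topspace by blast
    fix y assume y: "y \<in> topspace AT \<and> AT closure_of {y} = A"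
    have yA: "y \<in> A" using y closure_of_subset[of "{y}" AT] by blast
    show "y = g s F"
    proof (rule T0)
      show "y \<in> Arr" "g s F \<in> Arr" using y FU arrI AT_topspace by auto
      show "y \<in> AT closure_of {g s F}" using cl yA by simp
      show "g s F \<in> AT closure_of {y}" using y gFA by simp
    qed
  qed
qed

end

theorem lemma3p3:
  fixes m :: "'a \<Rightarrow> 'a \<Rightarrow> 'a" and z u :: 'a
  assumes "inverse_semigroup_zu m z u"
  shows "locally_quasi_compact (arrow_topology m z u) \<and> sober_space (arrow_topology m z u)"
proof -
  interpret isz m z u by (rule isz.intro) (rule assms)
  show ?thesis using LQC sober by blast
qed

end
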